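(* The relation $\{(\rho,\pi):\rho=[n]\text{ for some }n\ge1\text{ and }n\text{ is a part of }\pi\}$ is $\Pi_2$-definable in $\mathbf Y^*=\langle\mathcal P,\le,[1]+[1]\rangle$.
   Context: $\mathcal P$ is the set of all integer partitions, including the empty partition; a partition is a nonincreasing finite sequence of positive integers (its parts). $[n]$ denotes the partition with a single part $n$. Young's lattice $\mathbf Y=\langle\mathcal P,\le\rangle$ has $(s_1,\dots,s_r)\le(n_1,\dots,n_t)$ iff $r\le t$ and $s_i\le n_i$ for all $i\le r$; $\mathbf Y^*$ is $\mathbf Y$ with a constant symbol for the partition $[1]+[1]=(1,1)$. A relation is $\Pi_n$-definable if it is defined by a first-order formula in the language $\{\le,(1,1)\}$ in prenex form with $n$ alternating quantifier blocks, the outermost universal, and a quantifier-free matrix. *)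

theory Defs
  imports Main
begin

definition is_partition :: "nat list \<Rightarrow> bool" where
  "is_partition p \<longleftrightarrow> sorted_wrt (\<ge>) p \<and> (\<forall>x\<in>set p. 0 < x)"

definition young_le :: "nat list \<Rightarrow> nat list \<Rightarrow> bool" where
  "young_le s n \<longleftrightarrow> length s \<le> length n \<and> (\<forall>i<length s. s ! i \<le> n ! i)"

text \<open>The constant of Y*: the partition [1]+[1] = (1,1).\<close>
definition c11 :: "nat list" where
  "c11 = [1, 1]"

datatype tm = Var nat | Cst

datatype qf =
    TT
  | Le tm tm
  | Eq tm tm
  | Neg qf
  | Conj qf qf
  | Disj qf qf

fun tm_val :: "(nat \<Rightarrow> nat list) \<Rightarrow> tm \<Rightarrow> nat list" where
  "tm_val e (Var v) = e v"
| "tm_val e Cst = c11"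

fun qf_sat :: "(nat \<Rightarrow> nat list) \<Rightarrow> qf \<Rightarrow> bool" where
  "qf_sat e TT = True"
| "qf_sat e (Le s t) = young_le (tm_val e s) (tm_val e t)"
| "qf_sat e (Eq s t) = (tm_val e s = tm_val e t)"
| "qf_sat e (Neg f) = (\<not> qf_sat e f)"
| "qf_sat e (Conj f g) = (qf_sat e f \<and> qf_sat e g)"
| "qf_sat e (Disj f g) = (qf_sat e f \<or> qf_sat e g)"

text \<open>A prenex formula: a list of quantifier blocks (True = universal block,
  False = existential block), each block a list of variables, followed by a
  quantifier-free matrix.\<close>

fun block_sat :: "bool \<Rightarrow> nat list \<Rightarrow> ((nat \<Rightarrow> nat list) \<Rightarrow> bool) \<Rightarrow> (nat \<Rightarrow> nat list) \<Rightarrow> bool" where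
  "block_sat q [] P e = P e"
| "block_sat True (v # vs) P e = (\<forall>p. is_partition p \<longrightarrow> block_sat True vs P (e(v := p)))"
| "block_sat False (v # vs) P e = (\<exists>p. is_partition p \<and> block_sat False vs P (e(v := p)))"

fun prenex_sat :: "(bool \<times> nat list) list \<Rightarrow> qf \<Rightarrow> (nat \<Rightarrow> nat list) \<Rightarrow> bool" where
  "prenex_sat [] f e = qf_sat e f"
| "prenex_sat ((q, vs) # bs) f e = block_sat q vs (prenex_sat bs f) e"

text \<open>Prefix shape of a Pi_n formula: n alternating blocks, outermost universal.\<close>
definition pi_prefix :: "nat \<Rightarrow> (bool \<times> nat list) list \<Rightarrow> bool" where
  "pi_prefix n bs \<longleftrightarrow> length bs = n \<and> (\<forall>i<n. fst (bs ! i) = even i)"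

definition pi_definable2 :: "nat \<Rightarrow> (nat list \<Rightarrow> nat list \<Rightarrow> bool) \<Rightarrow> bool" where
  "pi_definable2 n R \<longleftrightarrow>
     (\<exists>bs f x y. pi_prefix n bs \<and> x \<noteq> y \<and>
        (\<forall>e. (\<forall>v. is_partition (e v)) \<longrightarrow> (R (e x) (e y) \<longleftrightarrow> prenex_sat bs f e)))"

definition single_part_rel :: "nat list \<Rightarrow> nat list \<Rightarrow> bool" where
  "single_part_rel \<rho> \<pi> \<longleftrightarrow> (\<exists>n\<ge>1. \<rho> = [n] \<and> n \<in> set \<pi>)"

end

theory Submission
  imports Defs
begin


lemma part_nth_pos: "is_partition z \<Longrightarrow> i < length z \<Longrightarrow> 0 < z!i"
  unfolding is_partition_def by (auto simp: in_set_conv_nth)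

lemma part_mono: "is_partition z \<Longrightarrow> i \<le> j \<Longrightarrow> j < length z \<Longrightarrow> z!j \<le> z!i"
  unfolding is_partition_def
  by (metis le_neq_implies_less order_refl sorted_wrt_iff_nth_less)

lemma part_intro: "(\<And>i j. i < j \<Longrightarrow> j < length z \<Longrightarrow> z!j \<le> z!i) \<Longrightarrow> (\<And>i. i < length z \<Longrightarrow> 0 < z!i) \<Longrightarrow> is_partition z"
  unfolding is_partition_def by (auto simp: sorted_wrt_iff_nth_less in_set_conv_nth)

lemma yl_nil1[simp]: "young_le [] z" by (simp add: young_le_def)
lemma yl_nil2[simp]: "young_le x [] \<longleftrightarrow> x = []" by (auto simp add: young_le_def)

lemma c11_le: assumes p: "is_partition z" shows "young_le c11 z \<longleftrightarrow> 2 \<le> length z"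
proof
  assume "young_le c11 z" then show "2 \<le> length z" by (simp add: young_le_def c11_def)
next
  assume "2 \<le> length z"
  have a: "0 < z!0" using part_nth_pos[OF p, of 0] \<open>2 \<le> length z\<close> by (cases z) auto
  have b: "0 < z!1" using part_nth_pos[OF p, of 1] \<open>2 \<le> length z\<close> by simp
  have "\<forall>i<length [1::nat, 1]. [1, 1] ! i \<le> z ! i"
  proof (intro allI impI)
    fix i assume "i < length [1::nat,1]"
    then have "i = 0 \<or> i = 1" by auto
    then show "[1::nat, 1] ! i \<le> z ! i" using a b by auto
  qed
  then show "young_le c11 z" using \<open>2 \<le> length z\<close> by (simp add: young_le_def c11_def)
qed

lemma yl_antisym: "young_le a b \<Longrightarrow> young_le b a \<Longrightarrow> a = b"
  unfolding young_le_def by (auto intro!: nth_equalityI intro: order.antisym)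

lemma yl_trans: "young_le a b \<Longrightarrow> young_le b c \<Longrightarrow> young_le a c"
  unfolding young_le_def by (meson dual_order.trans less_le_trans)

definition nth0 :: "nat list \<Rightarrow> nat \<Rightarrow> nat" where
  "nth0 xs i = (if i < length xs then xs!i else 0)"

definition pjoin :: "nat list \<Rightarrow> nat list \<Rightarrow> nat list" where
  "pjoin xs ys = map (\<lambda>i. max (nth0 xs i) (nth0 ys i)) [0..<max (length xs) (length ys)]"

lemma nth0_mono: "is_partition z \<Longrightarrow> i \<le> j \<Longrightarrow> nth0 z j \<le> nth0 z i"
  unfolding nth0_def using part_mono by auto

lemma pjoin_part: "is_partition a \<Longrightarrow> is_partition b \<Longrightarrow> is_partition (pjoin a b)"
proof (rule part_intro)
  fix i j assume "i < j" "j < length (pjoin a b)"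
  moreover assume "is_partition a" "is_partition b"
  ultimately show "pjoin a b ! j \<le> pjoin a b ! i"
    using nth0_mono[of a i j] nth0_mono[of b i j] by (auto simp: pjoin_def)
next
  fix i assume "i < length (pjoin a b)"
  moreover assume "is_partition a" "is_partition b"
  ultimately show "0 < pjoin a b ! i"
    by (auto simp: pjoin_def nth0_def max_def part_nth_pos split: if_splits)
qed

lemma pjoin_ge1: "young_le a (pjoin a b)"
  unfolding young_le_def pjoin_def nth0_def by auto

lemma pjoin_ge2: "young_le b (pjoin a b)"
  unfolding young_le_def pjoin_def nth0_def by auto

lemma le_pjoin: "young_le y (pjoin a b) \<Longrightarrow> i < length y \<Longrightarrow> y!i \<le> max (nth0 a i) (nth0 b i)"
  unfolding young_le_def pjoin_def by auto



lemma single_le: "is_partition z \<Longrightarrow> \<not> young_le c11 z \<Longrightarrow> length z \<le> 1"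
  using c11_le by force

lemma sound:
  assumes pp: "is_partition pi" "is_partition Q" "is_partition S" "is_partition Y" "is_partition z0"
  and n: "n \<in> set pi"
  and g1: "young_le z0 S" "\<not> young_le c11 z0" "\<not> young_le z0 [n]"
  and g2: "young_le Y S" "Y \<noteq> S" "young_le Q Y"
  and g3: "\<forall>Z. is_partition Z \<longrightarrow> young_le Z S \<and> Z \<noteq> S \<longrightarrow> young_le Z Y"
  and g4: "\<forall>Z. is_partition Z \<longrightarrow> young_le Z Q \<and> \<not> young_le c11 Z \<longrightarrow> young_le Z [n]"
  and g5: "\<forall>Z. is_partition Z \<longrightarrow> young_le pi Z \<and> young_le Q Z \<longrightarrow> young_le Y Z"
  shows "young_le Q pi"
proof -
  have "length z0 \<le> 1" using single_le pp(5) g1(2) by blast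
  moreover have "z0 \<noteq> []" using g1(3) by auto
  ultimately obtain m where z0: "z0 = [m]" by (cases z0) auto
  have mn: "n < m" using g1(3) unfolding z0 young_le_def by auto
  have S0: "S \<noteq> []" "m \<le> S!0" using g1(1) unfolding z0 young_le_def by auto
  define k where "k = length S"
  have k1: "1 \<le> k" using S0 k_def by (cases S) auto
  have Yk: "length Y \<le> k" "\<forall>i<length Y. Y!i \<le> S!i" using g2(1) k_def young_le_def by auto
  have pb: "is_partition (butlast S)"
    by (rule part_intro) (auto simp: nth_butlast part_mono[OF pp(3)] part_nth_pos[OF pp(3)])
  have "young_le (butlast S) S" unfolding young_le_def by (auto simp: nth_butlast)
  moreover have "length (butlast S) < length S" using S0 by simp
  then have "butlast S \<noteq> S" by (metis less_irrefl)
  ultimately have "young_le (butlast S) Y" using g3 pb by blast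
  then have B: "k - 1 \<le> length Y" "\<forall>i<k-1. S!i \<le> Y!i"
    unfolding young_le_def k_def by (auto simp: nth_butlast)
  define R where "R = replicate k (S!(k-1))"
  have "0 < S!(k-1)" using part_nth_pos[OF pp(3), of "k-1"] k1 k_def by simp
  then have pR: "is_partition R" unfolding R_def by (intro part_intro) auto
  have RS: "young_le R S" unfolding young_le_def R_def k_def
    by (auto intro: part_mono[OF pp(3)])
  have "R = S"
  proof (rule ccontr)
    assume "R \<noteq> S"
    then have "young_le R Y" using g3 pR RS by blast
    then have "k \<le> length Y" "S!(k-1) \<le> Y!(k-1)" unfolding young_le_def R_def using k1 by auto
    then have l: "length Y = k" using Yk(1) by simp
    have "\<forall>i<k. S!i \<le> Y!i"
    proof (intro allI impI)
      fix i assume "i < k"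
      then have "i < k - 1 \<or> i = k - 1" by linarith
      then show "S!i \<le> Y!i" using B(2) \<open>S!(k-1) \<le> Y!(k-1)\<close> by auto
    qed
    then have "young_le S Y" using l unfolding young_le_def k_def by auto
    then show False using yl_antisym g2(1,2) by blast
  qed
  have rect: "\<forall>i<k. S!i = S!(k-1)"
  proof (intro allI impI)
    fix i assume i: "i < k"
    have "S!i = R!i" using \<open>R = S\<close> by simp
    also have "R!i = S!(k-1)" unfolding R_def using i by simp
    finally show "S!i = S!(k-1)" .
  qed
  have "0 < k" using k1 by simp
  then have S0k: "S!0 = S!(k-1)" using rect by blast
  have Sbig: "\<forall>i<k. n < S!i"
  proof (intro allI impI)
    fix i assume "i < k"
    then have "S!i = S!(k-1)" using rect by blast
    then show "n < S!i" using S0k S0(2) mn by linarith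
  qed
  have Ybig: "\<forall>i<k-1. n < Y!i"
  proof (intro allI impI)
    fix i assume "i < k - 1"
    then have "i < k" by linarith
    then have "n < S!i" using Sbig by blast
    moreover have "S!i \<le> Y!i" using B(2) \<open>i < k - 1\<close> by blast
    ultimately show "n < Y!i" by linarith
  qed
  have lQ: "length Q \<le> k" using g2(3) Yk(1) unfolding young_le_def by auto
  have Qsmall: "\<forall>i<length Q. Q!i \<le> n"
  proof (intro allI impI)
    fix i assume i: "i < length Q"
    have "0 < Q!0" using part_nth_pos[OF pp(2), of 0] i by (cases Q) auto
    then have pq: "is_partition [Q!0]" by (auto simp: is_partition_def)
    have "young_le [Q!0] Q" using i unfolding young_le_def by auto
    moreover have "\<not> young_le c11 [Q!0]" using c11_le[OF pq] by simp
    ultimately have "young_le [Q!0] [n]" using g4 pq by blast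
    then have "Q!0 \<le> n" unfolding young_le_def by auto
    then show "Q!i \<le> n" using part_mono[OF pp(2), of 0 i] i by auto
  qed
  have "young_le Y (pjoin pi Q)" using g5 pjoin_part[OF pp(1,2)] pjoin_ge1 pjoin_ge2 by blast
  then have J: "\<forall>i<length Y. Y!i \<le> max (nth0 pi i) (nth0 Q i)" using le_pjoin by blast
  have pibig: "\<forall>i<k-1. i < length pi \<and> n < pi!i"
  proof (intro allI impI)
    fix i assume i: "i < k - 1"
    then have iy: "i < length Y" using B(1) by auto
    have "n < Y!i" using Ybig i by auto
    moreover have "nth0 Q i \<le> n" using Qsmall unfolding nth0_def by auto
    moreover have "Y!i \<le> max (nth0 pi i) (nth0 Q i)" using J iy by blast
    ultimately have "n < nth0 pi i" by linarith
    then show "i < length pi \<and> n < pi!i" unfolding nth0_def by (auto split: if_splits)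
  qed
  obtain j where j: "j < length pi" "pi!j = n" using n by (auto simp: in_set_conv_nth)
  have main: "\<forall>i<length Q. i < length pi \<and> Q!i \<le> pi!i"
  proof (intro allI impI)
    fix i assume i: "i < length Q"
    show "i < length pi \<and> Q!i \<le> pi!i"
    proof (cases i)
      case 0
      then show ?thesis using part_mono[OF pp(1), of 0 j] j Qsmall i by auto
    next
      case (Suc i')
      then have "i' < k - 1" using i lQ by auto
      then have "i' < length pi" "n < pi!i'" using pibig by auto
      have "i \<le> j"
      proof (rule ccontr)
        assume "\<not> i \<le> j"
        then have "j \<le> i'" using Suc by auto
        then have "pi!i' \<le> pi!j" using part_mono[OF pp(1)] \<open>i' < length pi\<close> by auto
        then show False using j \<open>n < pi!i'\<close> by auto
      qed
      then have "i < length pi" "pi!j \<le> pi!i" using j part_mono[OF pp(1), of i j] by auto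
      then show ?thesis using j Qsmall i by auto
    qed
  qed
  have "length Q \<le> length pi"
  proof (cases "length Q")
    case 0 then show ?thesis by simp
  next
    case (Suc l) then show ?thesis using main by (metis Suc_le_eq lessI)
  qed
  then show ?thesis using main unfolding young_le_def by auto
qed



declare replicate_Suc[simp del]

lemma complete:
  assumes pp: "is_partition pi" and n1: "1 \<le> n" and nn: "n \<notin> set pi"
  defines "p \<equiv> length (takeWhile (\<lambda>v. n < v) pi)"
  defines "Q \<equiv> replicate (Suc p) n" and "S \<equiv> replicate (Suc p) (Suc n)"
    and "Y \<equiv> replicate p (Suc n) @ [n]" and "z0 \<equiv> [Suc n]"
  shows "is_partition Q" "is_partition S" "is_partition Y" "is_partition z0"
    "young_le z0 S" "\<not> young_le c11 z0" "\<not> young_le z0 [n]"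
    "young_le Y S" "Y \<noteq> S" "young_le Q Y"
    "\<forall>Z. is_partition Z \<longrightarrow> young_le Z S \<and> Z \<noteq> S \<longrightarrow> young_le Z Y"
    "\<forall>Z. is_partition Z \<longrightarrow> young_le Z Q \<and> \<not> young_le c11 Z \<longrightarrow> young_le Z [n]"
    "\<forall>Z. is_partition Z \<longrightarrow> young_le pi Z \<and> young_le Q Z \<longrightarrow> young_le Y Z"
    "\<not> young_le Q pi"
proof -
  have big: "\<And>i. i < p \<Longrightarrow> i < length pi \<and> n < pi!i"
    unfolding p_def by (metis length_takeWhile_le nth_mem order_less_le_trans set_takeWhileD takeWhile_nth)
  have small: "p < length pi \<Longrightarrow> pi!p < n"
  proof -
    assume a: "p < length pi"
    then have "\<not> n < pi!p" unfolding p_def by (rule nth_length_takeWhile)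
    moreover have "pi!p \<noteq> n" using nn a nth_mem by metis
    ultimately show "pi!p < n" by linarith
  qed
  have Yn: "\<And>i. i < Suc p \<Longrightarrow> Y!i = (if i < p then Suc n else n)"
    unfolding Y_def by (auto simp: nth_append less_Suc_eq)
  have lY: "length Y = Suc p" unfolding Y_def by simp
  show "is_partition Q" "is_partition S" unfolding Q_def S_def using n1
    by (auto intro!: part_intro simp del: replicate_Suc)
  show "is_partition Y"
  proof (rule part_intro)
    fix i j assume "i < j" "j < length Y" then show "Y!j \<le> Y!i" using Yn lY by auto
  next
    fix i assume "i < length Y" then show "0 < Y!i" using Yn lY n1 by auto
  qed
  show "is_partition z0" unfolding z0_def by (simp add: is_partition_def)
  show "young_le z0 S" "\<not> young_le z0 [n]" unfolding z0_def S_def young_le_def by auto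
  show "\<not> young_le c11 z0" unfolding z0_def c11_def young_le_def by auto
  show "young_le Y S" unfolding young_le_def S_def using Yn lY by auto
  show "Y \<noteq> S"
  proof
    assume "Y = S" then have "Y!p = S!p" by simp
    then show False using Yn[of p] unfolding S_def by simp
  qed
  show "young_le Q Y" unfolding young_le_def Q_def using Yn lY by auto
  show "\<forall>Z. is_partition Z \<longrightarrow> young_le Z S \<and> Z \<noteq> S \<longrightarrow> young_le Z Y"
  proof (intro allI impI, elim conjE)
    fix Z assume pZ: "is_partition Z" and ZS: "young_le Z S" and ne: "Z \<noteq> S"
    have lZ: "length Z \<le> Suc p" and Zb: "\<forall>i<length Z. Z!i \<le> Suc n"
      using ZS unfolding young_le_def S_def by auto
    show "young_le Z Y"
    proof (cases "length Z = Suc p \<and> Z!p = Suc n")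
      case True
      have "\<forall>i<Suc p. Z!i = Suc n"
      proof (intro allI impI)
        fix i assume "i < Suc p"
        then have "Z!p \<le> Z!i" using part_mono[OF pZ, of i p] True by auto
        then show "Z!i = Suc n" using Zb True \<open>i < Suc p\<close> by (metis le_antisym)
      qed
      then have "Z = S" unfolding S_def using True by (auto intro: nth_equalityI)
      then show ?thesis using ne by simp
    next
      case False
      show ?thesis unfolding young_le_def
      proof (intro conjI allI impI)
        show "length Z \<le> length Y" using lZ lY by simp
      next
        fix i assume i: "i < length Z"
        show "Z!i \<le> Y!i"
        proof (cases "i < p")
          case True then show ?thesis using Yn[of i] Zb i by auto
        next
          case False
          then have "i = p" "length Z = Suc p" using i lZ by auto
          then show ?thesis using Yn[of p] Zb \<open>\<not> (length Z = Suc p \<and> Z!p = Suc n)\<close> i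
            by (metis le_SucE lessI)
        qed
      qed
    qed
  qed
  show "\<forall>Z. is_partition Z \<longrightarrow> young_le Z Q \<and> \<not> young_le c11 Z \<longrightarrow> young_le Z [n]"
  proof (intro allI impI, elim conjE)
    fix Z assume pZ: "is_partition Z" and ZQ: "young_le Z Q" and c: "\<not> young_le c11 Z"
    have "length Z \<le> 1" using single_le pZ c by blast
    moreover have "\<forall>i<length Z. Z!i \<le> n" using ZQ unfolding young_le_def Q_def by auto
    ultimately show "young_le Z [n]" unfolding young_le_def
    proof (intro conjI allI impI)
      fix i assume "length Z \<le> 1" "\<forall>i<length Z. Z!i \<le> n" "i < length Z"
      then show "Z!i \<le> [n]!i" by (cases i) auto
    qed auto
  qed
  show "\<forall>Z. is_partition Z \<longrightarrow> young_le pi Z \<and> young_le Q Z \<longrightarrow> young_le Y Z"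
  proof (intro allI impI, elim conjE)
    fix Z assume pZ: "is_partition Z" and a: "young_le pi Z" and b: "young_le Q Z"
    have lZ: "Suc p \<le> length Z" and bq: "\<forall>i<Suc p. n \<le> Z!i" using b unfolding young_le_def Q_def by auto
    have ap: "\<forall>i<length pi. pi!i \<le> Z!i" using a unfolding young_le_def by auto
    show "young_le Y Z" unfolding young_le_def
    proof (intro conjI allI impI)
      show "length Y \<le> length Z" using lZ lY by simp
    next
      fix i assume i: "i < length Y"
      show "Y!i \<le> Z!i"
      proof (cases "i < p")
        case True
        then have "i < length pi" "n < pi!i" using big by auto
        then show ?thesis using Yn[of i] True ap by fastforce
      next
        case False then show ?thesis using Yn[of i] i lY bq by auto
      qed
    qed
  qed
  show "\<not> young_le Q pi"
  proof
    assume "young_le Q pi"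
    then have "Suc p \<le> length pi" "n \<le> pi!p" unfolding young_le_def Q_def by auto
    then show False using small by auto
  qed
qed



declare replicate_Suc[simp]

definition MM :: "nat list \<Rightarrow> nat list \<Rightarrow> nat list \<Rightarrow> nat list \<Rightarrow> nat list \<Rightarrow> nat list \<Rightarrow> nat list \<Rightarrow> nat list \<Rightarrow> bool" where
  "MM x y Q S Y z0 Z w \<longleftrightarrow> \<not> young_le c11 x \<and> \<not> young_le x w \<and>
    (\<not> young_le z0 S \<or> young_le c11 z0 \<or> young_le z0 x \<or> \<not> young_le Y S \<or> Y = S \<or> \<not> young_le Q Y
     \<or> (young_le Z S \<and> Z \<noteq> S \<and> \<not> young_le Z Y)
     \<or> (young_le Z Q \<and> \<not> young_le c11 Z \<and> \<not> young_le Z x)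
     \<or> (young_le y Z \<and> young_le Q Z \<and> \<not> young_le Y Z)
     \<or> young_le Q y)"

lemma equiv:
  assumes px: "is_partition x" and py: "is_partition y"
  shows "single_part_rel x y \<longleftrightarrow> (\<forall>Q. is_partition Q \<longrightarrow> (\<forall>S. is_partition S \<longrightarrow> (\<forall>Y. is_partition Y \<longrightarrow>
     (\<forall>z0. is_partition z0 \<longrightarrow> (\<exists>Z. is_partition Z \<and> (\<exists>w. is_partition w \<and> MM x y Q S Y z0 Z w))))))"
proof
  assume "single_part_rel x y"
  then obtain n where n: "1 \<le> n" "x = [n]" "n \<in> set y" unfolding single_part_rel_def by blast
  have p0: "is_partition []" by (simp add: is_partition_def)
  have h1: "\<not> young_le c11 x" "\<not> young_le x []" using n by (auto simp: c11_def young_le_def)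
  show "\<forall>Q. is_partition Q \<longrightarrow> (\<forall>S. is_partition S \<longrightarrow> (\<forall>Y. is_partition Y \<longrightarrow>
     (\<forall>z0. is_partition z0 \<longrightarrow> (\<exists>Z. is_partition Z \<and> (\<exists>w. is_partition w \<and> MM x y Q S Y z0 Z w)))))"
  proof (intro allI impI)
    fix Q S Y z0 assume pp: "is_partition Q" "is_partition S" "is_partition Y" "is_partition z0"
    show "\<exists>Z. is_partition Z \<and> (\<exists>w. is_partition w \<and> MM x y Q S Y z0 Z w)"
    proof (cases "\<exists>Z. is_partition Z \<and> \<not> ((young_le Z S \<and> Z \<noteq> S \<longrightarrow> young_le Z Y) \<and>
        (young_le Z Q \<and> \<not> young_le c11 Z \<longrightarrow> young_le Z [n]) \<and> (young_le y Z \<and> young_le Q Z \<longrightarrow> young_le Y Z))")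
      case True
      then obtain Z where "is_partition Z" "\<not> ((young_le Z S \<and> Z \<noteq> S \<longrightarrow> young_le Z Y) \<and>
        (young_le Z Q \<and> \<not> young_le c11 Z \<longrightarrow> young_le Z [n]) \<and> (young_le y Z \<and> young_le Q Z \<longrightarrow> young_le Y Z))"
        by blast
      then show ?thesis using h1 p0 n(2) unfolding MM_def by blast
    next
      case False
      then have g: "\<forall>Z. is_partition Z \<longrightarrow> young_le Z S \<and> Z \<noteq> S \<longrightarrow> young_le Z Y"
        "\<forall>Z. is_partition Z \<longrightarrow> young_le Z Q \<and> \<not> young_le c11 Z \<longrightarrow> young_le Z [n]"
        "\<forall>Z. is_partition Z \<longrightarrow> young_le y Z \<and> young_le Q Z \<longrightarrow> young_le Y Z" by blast+
      have "(\<not> young_le z0 S \<or> young_le c11 z0 \<or> young_le z0 x \<or> \<not> young_le Y S \<or> Y = S \<or> \<not> young_le Q Y)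
        \<or> young_le Q y"
        using sound[OF py pp(1-4) n(3) _ _ _ _ _ _ g] n(2) by blast
      then show ?thesis using h1 p0 unfolding MM_def by blast
    qed
  qed
next
  assume H: "\<forall>Q. is_partition Q \<longrightarrow> (\<forall>S. is_partition S \<longrightarrow> (\<forall>Y. is_partition Y \<longrightarrow>
     (\<forall>z0. is_partition z0 \<longrightarrow> (\<exists>Z. is_partition Z \<and> (\<exists>w. is_partition w \<and> MM x y Q S Y z0 Z w)))))"
  have p0: "is_partition []" by (simp add: is_partition_def)
  obtain Z0 w0 where "MM x y [] [] [] [] Z0 w0" using H p0 by blast
  then have "\<not> young_le c11 x" "\<not> young_le x w0" unfolding MM_def by auto
  then have "length x \<le> 1" "x \<noteq> []" using single_le px by auto
  then obtain n where xn: "x = [n]" by (cases x) auto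
  have n1: "1 \<le> n" using part_nth_pos[OF px, of 0] xn by simp
  show "single_part_rel x y"
  proof (rule ccontr)
    assume "\<not> single_part_rel x y"
    then have nn: "n \<notin> set y" using xn n1 unfolding single_part_rel_def by blast
    note C = complete[OF py n1 nn]
    define p where "p = length (takeWhile (\<lambda>v. n < v) y)"
    obtain Z w where "MM x y (replicate (Suc p) n) (replicate (Suc p) (Suc n)) (replicate p (Suc n) @ [n]) [Suc n] Z w"
      "is_partition Z"
      using H C(1-4) unfolding p_def by blast
    then show False using C(5-) xn unfolding MM_def p_def by blast
  qed
qed



definition fm :: qf where
  "fm = Conj (Neg (Le Cst (Var 0))) (Conj (Neg (Le (Var 0) (Var 7))) (Disj (Neg (Le (Var 5) (Var 3))) (Disj (Le Cst (Var 5)) (Disj (Le (Var 5) (Var 0)) (Disj (Neg (Le (Var 4) (Var 3))) (Disj (Eq (Var 4) (Var 3)) (Disj (Neg (Le (Var 2) (Var 4))) (Disj (Conj (Le (Var 6) (Var 3)) (Conj (Neg (Eq (Var 6) (Var 3))) (Neg (Le (Var 6) (Var 4))))) (Disj (Conj (Le (Var 6) (Var 2)) (Conj (Neg (Le Cst (Var 6))) (Neg (Le (Var 6) (Var 0))))) (Disj (Conj (Le (Var 1) (Var 6)) (Conj (Le (Var 2) (Var 6)) (Neg (Le (Var 4) (Var 6))))) (Le (Var 2) (Var 1))))))))))))"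

theorem proposition3p6:
  shows "pi_definable2 2 single_part_rel"
  unfolding pi_definable2_def
proof (intro exI conjI allI impI)
  show "pi_prefix 2 [(True, [2,3,4,5]), (False, [6,7])]"
    unfolding pi_prefix_def
  proof (intro conjI allI impI)
    fix i :: nat assume "i < 2"
    then have "i = 0 \<or> i = 1" by auto
    then show "fst ([(True, [2::nat,3,4,5]), (False, [6,7])] ! i) = even i" by auto
  qed simp
  show "(0::nat) \<noteq> 1" by simp
  fix e :: "nat \<Rightarrow> nat list" assume pe: "\<forall>v. is_partition (e v)"
  show "single_part_rel (e 0) (e 1) = prenex_sat [(True, [2,3,4,5]), (False, [6,7])] fm e"
    unfolding equiv[OF pe[rule_format] pe[rule_format]]
    by (simp add: fm_def MM_def)
qed

end
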